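(* Let $G$ be a finite $3$-group of nilpotency class at most $3$ such that $G/Z(G)$ is powerful. Then $\exp \Omega_{1}(G)\le 3$.
   Context: A finite $3$-group $Q$ is powerful if $[Q,Q]\le Q^{3}=\langle q^3\mid q\in Q\rangle$. $\Omega_{1}(G)=\langle g\in G\mid g^{3}=1\rangle$. *)

theory Defs
  imports "HOL-Algebra.Algebra"
begin

definition center :: "('a, 'b) monoid_scheme \<Rightarrow> 'a set" where
  "center G = {z \<in> carrier G. \<forall>g \<in> carrier G. z \<otimes>\<^bsub>G\<^esub> g = g \<otimes>\<^bsub>G\<^esub> z}"

text \<open>Commutator subgroup [H,K], commutators [h,k] = h k h^-1 k^-1 (any convention gives the same subgroup).\<close>
definition comm_subgroup :: "('a, 'b) monoid_scheme \<Rightarrow> 'a set \<Rightarrow> 'a set \<Rightarrow> 'a set" where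
  "comm_subgroup G H K = generate G
     {h \<otimes>\<^bsub>G\<^esub> k \<otimes>\<^bsub>G\<^esub> inv\<^bsub>G\<^esub> h \<otimes>\<^bsub>G\<^esub> inv\<^bsub>G\<^esub> k | h k. h \<in> H \<and> k \<in> K}"

text \<open>lower_central G n is gamma_(n+1)(G): gamma_1 = G, gamma_(i+1) = [gamma_i, G].\<close>
fun lower_central :: "('a, 'b) monoid_scheme \<Rightarrow> nat \<Rightarrow> 'a set" where
  "lower_central G 0 = carrier G"
| "lower_central G (Suc n) = comm_subgroup G (lower_central G n) (carrier G)"

definition nilpotent_class_le :: "('a, 'b) monoid_scheme \<Rightarrow> nat \<Rightarrow> bool" where
  "nilpotent_class_le G c \<longleftrightarrow> lower_central G c = {\<one>\<^bsub>G\<^esub>}"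

definition powerful3 :: "('a, 'b) monoid_scheme \<Rightarrow> bool" where
  "powerful3 Q \<longleftrightarrow> comm_subgroup Q (carrier Q) (carrier Q)
      \<subseteq> generate Q {q [^]\<^bsub>Q\<^esub> (3::nat) | q. q \<in> carrier Q}"

definition Omega1_3 :: "('a, 'b) monoid_scheme \<Rightarrow> 'a set" where
  "Omega1_3 G = generate G {g \<in> carrier G. g [^]\<^bsub>G\<^esub> (3::nat) = \<one>\<^bsub>G\<^esub>}"

end

theory Submission
  imports Defs
begin

lemma (in group) ext3:
  assumes "a \<in> carrier G" "b \<in> carrier G" "a \<otimes> b = e" "r \<in> carrier G"
  shows "a \<otimes> (b \<otimes> r) = e \<otimes> r"
  using assms by (metis m_assoc)

lemma (in group) calcC:
  assumes "g\<in>carrier G" "x\<in>carrier G" "c\<in>carrier G" "g \<otimes> x = c \<otimes> (x \<otimes> g)"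
  shows "g \<otimes> (x \<otimes> (x \<otimes> x)) = c \<otimes> (x \<otimes> (c \<otimes> (x \<otimes> (c \<otimes> (x \<otimes> g)))))"
proof -
  have e: "\<And>r. r\<in>carrier G \<Longrightarrow> g \<otimes> (x \<otimes> r) = c \<otimes> (x \<otimes> (g \<otimes> r))"
    using assms by (simp add: ext3 m_assoc[symmetric])
  show ?thesis using assms by (simp add: e)
qed

lemma (in group) calcB:
  assumes "s\<in>carrier G" "x\<in>carrier G" "c\<in>carrier G" "x \<otimes> c = s \<otimes> (c \<otimes> x)"
    "x \<otimes> s = s \<otimes> x" "c \<otimes> s = s \<otimes> c"
  shows "c \<otimes> (x \<otimes> (c \<otimes> (x \<otimes> (c \<otimes> x)))) = s \<otimes> (s \<otimes> (s \<otimes> (c \<otimes> (c \<otimes> (c \<otimes> (x \<otimes> (x \<otimes> x)))))))"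
proof -
  have e1: "\<And>r. r\<in>carrier G \<Longrightarrow> x \<otimes> (c \<otimes> r) = s \<otimes> (c \<otimes> (x \<otimes> r))"
    using assms by (simp add: ext3 m_assoc[symmetric])
  have e2: "\<And>r. r\<in>carrier G \<Longrightarrow> x \<otimes> (s \<otimes> r) = s \<otimes> (x \<otimes> r)"
    using assms by (simp add: ext3 m_assoc[symmetric])
  have e3: "\<And>r. r\<in>carrier G \<Longrightarrow> c \<otimes> (s \<otimes> r) = s \<otimes> (c \<otimes> r)"
    using assms by (simp add: ext3 m_assoc[symmetric])
  show ?thesis using assms by (simp add: e1 e2 e3)
qed

lemma (in group) calcA:
  assumes "s\<in>carrier G" "x\<in>carrier G" "c\<in>carrier G" "x \<otimes> c = s \<otimes> (c \<otimes> x)"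
    "x \<otimes> s = s \<otimes> x"
  shows "x \<otimes> (x \<otimes> (x \<otimes> c)) = s \<otimes> (s \<otimes> (s \<otimes> (c \<otimes> (x \<otimes> (x \<otimes> x)))))"
proof -
  have e1: "\<And>r. r\<in>carrier G \<Longrightarrow> x \<otimes> (c \<otimes> r) = s \<otimes> (c \<otimes> (x \<otimes> r))"
    using assms by (simp add: ext3 m_assoc[symmetric])
  have e2: "\<And>r. r\<in>carrier G \<Longrightarrow> x \<otimes> (s \<otimes> r) = s \<otimes> (x \<otimes> r)"
    using assms by (simp add: ext3 m_assoc[symmetric])
  show ?thesis using assms by (simp add: e1 e2)
qed

lemma (in group) calcA':
  assumes "s\<in>carrier G" "x\<in>carrier G" "c\<in>carrier G" "x \<otimes> c = s \<otimes> (c \<otimes> x)"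
    "c \<otimes> s = s \<otimes> c"
  shows "x \<otimes> (c \<otimes> (c \<otimes> c)) = s \<otimes> (s \<otimes> (s \<otimes> (c \<otimes> (c \<otimes> (c \<otimes> x)))))"
proof -
  have e1: "\<And>r. r\<in>carrier G \<Longrightarrow> x \<otimes> (c \<otimes> r) = s \<otimes> (c \<otimes> (x \<otimes> r))"
    using assms by (simp add: ext3 m_assoc[symmetric])
  have e2: "\<And>r. r\<in>carrier G \<Longrightarrow> c \<otimes> (s \<otimes> r) = s \<otimes> (c \<otimes> r)"
    using assms by (simp add: ext3 m_assoc[symmetric])
  show ?thesis using assms by (simp add: e1 e2)
qed

lemma (in group) calcD:
  assumes "g\<in>carrier G" "x\<in>carrier G" "c\<in>carrier G" "q\<in>carrier G"
    "g \<otimes> x = c \<otimes> (x \<otimes> g)" "g \<otimes> c = q \<otimes> (c \<otimes> g)"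
    "x \<otimes> q = q \<otimes> x" "c \<otimes> q = q \<otimes> c" "g \<otimes> q = q \<otimes> g"
  shows "g \<otimes> (g \<otimes> (g \<otimes> x)) = q \<otimes> (q \<otimes> (q \<otimes> (c \<otimes> (c \<otimes> (c \<otimes> (x \<otimes> (g \<otimes> (g \<otimes> g))))))))"
proof -
  have e1: "\<And>r. r\<in>carrier G \<Longrightarrow> g \<otimes> (x \<otimes> r) = c \<otimes> (x \<otimes> (g \<otimes> r))"
    using assms by (simp add: ext3 m_assoc[symmetric])
  have e2: "\<And>r. r\<in>carrier G \<Longrightarrow> g \<otimes> (c \<otimes> r) = q \<otimes> (c \<otimes> (g \<otimes> r))"
    using assms by (simp add: ext3 m_assoc[symmetric])
  have e3: "\<And>r. r\<in>carrier G \<Longrightarrow> x \<otimes> (q \<otimes> r) = q \<otimes> (x \<otimes> r)"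
    using assms by (simp add: ext3 m_assoc[symmetric])
  have e4: "\<And>r. r\<in>carrier G \<Longrightarrow> c \<otimes> (q \<otimes> r) = q \<otimes> (c \<otimes> r)"
    using assms by (simp add: ext3 m_assoc[symmetric])
  have e5: "\<And>r. r\<in>carrier G \<Longrightarrow> g \<otimes> (q \<otimes> r) = q \<otimes> (g \<otimes> r)"
    using assms by (simp add: ext3 m_assoc[symmetric])
  show ?thesis using assms by (simp add: e1 e2 e3 e4 e5)
qed

lemma (in group) inv_cancel_l [simp]: "x \<in> carrier G \<Longrightarrow> y \<in> carrier G \<Longrightarrow> inv x \<otimes> (x \<otimes> y) = y"
  by (simp add: m_assoc[symmetric])
lemma (in group) inv_cancel_r [simp]: "x \<in> carrier G \<Longrightarrow> y \<in> carrier G \<Longrightarrow> x \<otimes> (inv x \<otimes> y) = y"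
  by (simp add: m_assoc[symmetric])

definition cm :: "('a,'b) monoid_scheme \<Rightarrow> 'a \<Rightarrow> 'a \<Rightarrow> 'a" where
  "cm G a b = a \<otimes>\<^bsub>G\<^esub> b \<otimes>\<^bsub>G\<^esub> inv\<^bsub>G\<^esub> a \<otimes>\<^bsub>G\<^esub> inv\<^bsub>G\<^esub> b"

lemma (in group) cm_closed [simp]: "a \<in> carrier G \<Longrightarrow> b \<in> carrier G \<Longrightarrow> cm G a b \<in> carrier G"
  by (simp add: cm_def)

lemma (in group) cm_eq: "a \<in> carrier G \<Longrightarrow> b \<in> carrier G \<Longrightarrow> a \<otimes> b = cm G a b \<otimes> (b \<otimes> a)"
  by (simp add: cm_def m_assoc)

lemma (in group) cm_swap: "a \<in> carrier G \<Longrightarrow> b \<in> carrier G \<Longrightarrow> cm G b a = inv (cm G a b)"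
  by (simp add: cm_def m_assoc inv_mult_group)

definition (in group) cen where "cen z \<longleftrightarrow> z \<in> carrier G \<and> (\<forall>y\<in>carrier G. z \<otimes> y = y \<otimes> z)"

lemma (in group) cen_inv: assumes "cen z" shows "cen (inv z)"
proof -
  have "\<forall>y\<in>carrier G. inv z \<otimes> y = y \<otimes> inv z"
  proof
    fix y assume y: "y \<in> carrier G"
    have z: "z \<in> carrier G" "z \<otimes> y = y \<otimes> z" using assms y cen_def by auto
    have "inv z \<otimes> y = inv z \<otimes> (y \<otimes> z) \<otimes> inv z" using z y by (simp add: m_assoc)
    also have "\<dots> = inv z \<otimes> (z \<otimes> y) \<otimes> inv z" using z by simp
    also have "\<dots> = y \<otimes> inv z" using z(1) y by (simp add: m_assoc)
    finally show "inv z \<otimes> y = y \<otimes> inv z" .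
  qed
  thus ?thesis using assms cen_def by auto
qed

lemma (in group) K1:
  assumes H3: "\<And>a b d. a \<in> carrier G \<Longrightarrow> b \<in> carrier G \<Longrightarrow> d \<in> carrier G \<Longrightarrow> cen (cm G (cm G a b) d)"
    and g: "g \<in> carrier G" and x: "x \<in> carrier G" and x3: "x \<otimes> (x \<otimes> x) = \<one>"
  shows "cm G g x \<otimes> (cm G g x \<otimes> cm G g x) = \<one>"
proof -
  define c where "c = cm G g x"
  define s where "s = cm G x c"
  have c: "c \<in> carrier G" using g x c_def by simp
  have s: "s \<in> carrier G" using c x s_def by simp
  have sc: "cen s" unfolding s_def using cm_swap[OF c x] cen_inv[OF H3[OF g x x]] c_def by simp
  have gx: "g \<otimes> x = c \<otimes> (x \<otimes> g)" using cm_eq[OF g x] c_def by simp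
  have xc: "x \<otimes> c = s \<otimes> (c \<otimes> x)" using cm_eq[OF x c] s_def by simp
  have xs: "x \<otimes> s = s \<otimes> x" "c \<otimes> s = s \<otimes> c" using sc x c cen_def by auto
  have "x \<otimes> (x \<otimes> (x \<otimes> c)) = s \<otimes> (s \<otimes> (s \<otimes> (c \<otimes> (x \<otimes> (x \<otimes> x)))))"
    using calcA[OF s x c xc xs(1)] .
  hence "c = (s \<otimes> (s \<otimes> s)) \<otimes> c" using x3 x c s by (simp add: m_assoc[symmetric])
  hence s3: "s \<otimes> (s \<otimes> s) = \<one>" using c s by simp
  have "g \<otimes> (x \<otimes> (x \<otimes> x)) = c \<otimes> (x \<otimes> (c \<otimes> (x \<otimes> (c \<otimes> (x \<otimes> g)))))"
    using calcC[OF g x c gx] .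
  hence "g = (c \<otimes> (x \<otimes> (c \<otimes> (x \<otimes> (c \<otimes> x))))) \<otimes> g" using x3 x c g by (simp add: m_assoc)
  hence "c \<otimes> (x \<otimes> (c \<otimes> (x \<otimes> (c \<otimes> x)))) = \<one>" using c x g by simp
  hence "s \<otimes> (s \<otimes> (s \<otimes> (c \<otimes> (c \<otimes> (c \<otimes> (x \<otimes> (x \<otimes> x))))))) = \<one>"
    using calcB[OF s x c xc xs] by simp
  hence "(s \<otimes> (s \<otimes> s)) \<otimes> (c \<otimes> (c \<otimes> c)) \<otimes> (x \<otimes> (x \<otimes> x)) = \<one>"
    using s c x by (simp add: m_assoc)
  thus ?thesis using s3 x3 c c_def by simp
qed

lemma (in group) K2:
  assumes H3: "\<And>a b d. a \<in> carrier G \<Longrightarrow> b \<in> carrier G \<Longrightarrow> d \<in> carrier G \<Longrightarrow> cen (cm G (cm G a b) d)"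
    and g: "g \<in> carrier G" and x: "x \<in> carrier G" and x3: "x \<otimes> (x \<otimes> x) = \<one>"
  shows "(g \<otimes> (g \<otimes> g)) \<otimes> x = x \<otimes> (g \<otimes> (g \<otimes> g))"
proof -
  define c where "c = cm G g x"
  define q where "q = cm G g c"
  have c: "c \<in> carrier G" using g x c_def by simp
  have q: "q \<in> carrier G" using c g q_def by simp
  have c3: "c \<otimes> (c \<otimes> c) = \<one>" using K1[OF H3 g x x3] c_def by simp
  have qc: "cen q" unfolding q_def using cm_swap[OF c g] cen_inv[OF H3[OF g x g]] c_def by simp
  have gx: "g \<otimes> x = c \<otimes> (x \<otimes> g)" using cm_eq[OF g x] c_def by simp
  have gc: "g \<otimes> c = q \<otimes> (c \<otimes> g)" using cm_eq[OF g c] q_def by simp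
  have qs: "x \<otimes> q = q \<otimes> x" "c \<otimes> q = q \<otimes> c" "g \<otimes> q = q \<otimes> g" using qc x c g cen_def by auto
  have "g \<otimes> (c \<otimes> (c \<otimes> c)) = q \<otimes> (q \<otimes> (q \<otimes> (c \<otimes> (c \<otimes> (c \<otimes> g)))))"
    using calcA'[OF q g c gc qs(2)] .
  hence "g = (q \<otimes> (q \<otimes> q)) \<otimes> g" using c3 c q g by (simp add: m_assoc[symmetric])
  hence q3: "q \<otimes> (q \<otimes> q) = \<one>" using q g by simp
  have "g \<otimes> (g \<otimes> (g \<otimes> x)) = q \<otimes> (q \<otimes> (q \<otimes> (c \<otimes> (c \<otimes> (c \<otimes> (x \<otimes> (g \<otimes> (g \<otimes> g))))))))"
    using calcD[OF g x c q gx gc qs] .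
  also have "\<dots> = (q \<otimes> (q \<otimes> q)) \<otimes> (c \<otimes> (c \<otimes> c)) \<otimes> (x \<otimes> (g \<otimes> (g \<otimes> g)))"
    using q c g x by (simp add: m_assoc)
  finally show ?thesis using q3 c3 g x by (simp add: m_assoc)
qed

lemma (in group) pow3: "x [^] (3::nat) = x \<otimes> (x \<otimes> x)" if "x \<in> carrier G"
  using that by (simp add: numeral_3_eq_3 m_assoc)

lemma (in group) K3:
  assumes H3: "\<And>a b d. a \<in> carrier G \<Longrightarrow> b \<in> carrier G \<Longrightarrow> d \<in> carrier G \<Longrightarrow> cen (cm G (cm G a b) d)"
    and x: "x \<in> carrier G" and y: "y \<in> carrier G"
    and x3: "x \<otimes> (x \<otimes> x) = \<one>" and y3: "y \<otimes> (y \<otimes> y) = \<one>"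
    and dx: "cm G x y \<otimes> x = x \<otimes> cm G x y" and dy: "cm G x y \<otimes> y = y \<otimes> cm G x y"
  shows "(y \<otimes> x) \<otimes> ((y \<otimes> x) \<otimes> (y \<otimes> x)) = \<one>"
proof -
  define d where "d = cm G x y"
  have d: "d \<in> carrier G" using x y d_def by simp
  have d3: "d \<otimes> (d \<otimes> d) = \<one>" using K1[OF H3 x y y3] d_def by simp
  have xy: "x \<otimes> y = d \<otimes> (y \<otimes> x)" using cm_eq[OF x y] d_def by simp
  have "y \<otimes> (x \<otimes> (y \<otimes> (x \<otimes> (y \<otimes> x)))) = d \<otimes> (d \<otimes> (d \<otimes> (y \<otimes> (y \<otimes> (y \<otimes> (x \<otimes> (x \<otimes> x)))))))"
    using calcB[OF d x y xy] dx dy d_def by simp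
  also have "\<dots> = (d \<otimes> (d \<otimes> d)) \<otimes> (y \<otimes> (y \<otimes> y)) \<otimes> (x \<otimes> (x \<otimes> x))"
    using d x y by (simp add: m_assoc)
  finally show ?thesis using d3 x3 y3 x y by (simp add: m_assoc)
qed

lemma (in group) core:
  assumes H3: "\<And>a b d. a \<in> carrier G \<Longrightarrow> b \<in> carrier G \<Longrightarrow> d \<in> carrier G \<Longrightarrow> cen (cm G (cm G a b) d)"
    and P: "\<And>a b. a \<in> carrier G \<Longrightarrow> b \<in> carrier G \<Longrightarrow>
       \<exists>w z. w \<in> generate G {g [^] (3::nat) | g. g \<in> carrier G} \<and> cen z \<and> cm G a b = z \<otimes> w"
  shows "\<forall>x\<in>Omega1_3 G. x [^] (3::nat) = \<one>"
proof -
  define Cu where "Cu = {g [^] (3::nat) | g. g \<in> carrier G}"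
  have Cu: "Cu \<subseteq> carrier G" unfolding Cu_def by auto
  have comm_cube: "w \<otimes> x = x \<otimes> w \<and> w \<in> carrier G"
    if w: "w \<in> generate G Cu" and x: "x \<in> carrier G" and x3: "x \<otimes> (x \<otimes> x) = \<one>" for w x
    using w
  proof (induction rule: generate.induct)
    case one then show ?case using x by simp
  next
    case (incl h)
    then obtain g where g: "g \<in> carrier G" "h = g \<otimes> (g \<otimes> g)" unfolding Cu_def using pow3 by auto
    then show ?case using K2[OF H3 g(1) x x3] by simp
  next
    case (inv h)
    then obtain g where g: "g \<in> carrier G" "h = g \<otimes> (g \<otimes> g)" unfolding Cu_def using pow3 by auto
    have hc: "h \<in> carrier G" using g by simp
    have e: "h \<otimes> x = x \<otimes> h" using K2[OF H3 g(1) x x3] g by simp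
    have "inv h \<otimes> x = inv h \<otimes> (x \<otimes> h) \<otimes> inv h" using hc x by (simp add: m_assoc)
    also have "\<dots> = inv h \<otimes> (h \<otimes> x) \<otimes> inv h" using e by simp
    also have "\<dots> = x \<otimes> inv h" using hc x by (simp add: m_assoc)
    finally show ?case using hc by simp
  next
    case (eng h1 h2)
    then show ?case using x by (simp add: m_assoc) (metis m_assoc)
  qed
  define S where "S = {g \<in> carrier G. g [^] (3::nat) = \<one>}"
  have closed: "x \<otimes> y \<in> S" if "x \<in> S" "y \<in> S" for x y
  proof -
    have x: "x \<in> carrier G" "x \<otimes> (x \<otimes> x) = \<one>" using that pow3 S_def by auto
    have y: "y \<in> carrier G" "y \<otimes> (y \<otimes> y) = \<one>" using that pow3 S_def by auto
    obtain w z where wz: "w \<in> generate G Cu" "cen z" "cm G y x = z \<otimes> w"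
      using P[OF y(1) x(1)] Cu_def by blast
    have z: "z \<in> carrier G" using wz cen_def by auto
    have "cm G y x \<otimes> u = u \<otimes> cm G y x" if u: "u \<in> carrier G" "u \<otimes> (u \<otimes> u) = \<one>" for u
    proof -
      have w: "w \<otimes> u = u \<otimes> w" "w \<in> carrier G" using comm_cube[OF wz(1) u] by auto
      have zu: "z \<otimes> u = u \<otimes> z" using wz(2) u cen_def by auto
      have "z \<otimes> w \<otimes> u = z \<otimes> (u \<otimes> w)" using w z u by (simp add: m_assoc)
      also have "\<dots> = (z \<otimes> u) \<otimes> w" using w z u by (simp add: m_assoc)
      also have "\<dots> = u \<otimes> (z \<otimes> w)" using zu w z u by (simp add: m_assoc)
      finally show ?thesis using wz(3) by simp
    qed
    hence "(x \<otimes> y) \<otimes> ((x \<otimes> y) \<otimes> (x \<otimes> y)) = \<one>"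
      using K3[OF H3 y(1) x(1) y(2) x(2)] x y by blast
    thus ?thesis using x y pow3 S_def by simp
  qed
  have "generate G S \<subseteq> S"
  proof
    fix g assume "g \<in> generate G S"
    then show "g \<in> S"
    proof (induction rule: generate.induct)
      case one then show ?case using S_def by simp
    next
      case (incl h) then show ?case .
    next
      case (inv h) then show ?case using S_def nat_pow_inv by auto
    next
      case (eng h1 h2) then show ?case using closed by blast
    qed
  qed
  thus ?thesis unfolding Omega1_3_def S_def by auto
qed

lemma (in group) cen_center: "cen z \<longleftrightarrow> z \<in> center G"
  by (simp add: cen_def center_def)

lemma (in group) center_normal: "center G \<lhd> G"
proof -
  have sg: "subgroup (center G) G"
  proof (rule subgroupI)
    show "center G \<subseteq> carrier G" by (auto simp: center_def)
    show "center G \<noteq> {}" using one_closed by (auto simp: center_def)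
    show "inv a \<in> center G" if "a \<in> center G" for a
      using cen_inv that cen_center by blast
    show "a \<otimes> b \<in> center G" if "a \<in> center G" "b \<in> center G" for a b
    proof -
      have ab: "a \<in> carrier G" "b \<in> carrier G" using that by (auto simp: center_def)
      have "(a \<otimes> b) \<otimes> g = g \<otimes> (a \<otimes> b)" if g: "g \<in> carrier G" for g
      proof -
        have e1: "b \<otimes> g = g \<otimes> b" and e2: "a \<otimes> g = g \<otimes> a"
          using that \<open>a \<in> center G\<close> \<open>b \<in> center G\<close> unfolding center_def by blast+
        have "(a \<otimes> b) \<otimes> g = a \<otimes> (g \<otimes> b)" using ab g e1 by (simp add: m_assoc)
        also have "\<dots> = (g \<otimes> a) \<otimes> b" using ab g e2 by (simp add: m_assoc[symmetric])
        finally show ?thesis using ab g by (simp add: m_assoc)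
      qed
      thus ?thesis using ab by (simp add: center_def)
    qed
  qed
  have "x \<otimes> h \<otimes> inv x \<in> center G" if "x \<in> carrier G" "h \<in> center G" for x h
  proof -
    have hx: "h \<otimes> x = x \<otimes> h" "h \<in> carrier G" using that unfolding center_def by blast+
    have "x \<otimes> h \<otimes> inv x = h \<otimes> x \<otimes> inv x" using hx by simp
    also have "\<dots> = h" using that hx(2) by (simp add: m_assoc)
    finally show ?thesis using that by simp
  qed
  thus ?thesis using sg normal_inv_iff by blast
qed

lemma lc_cm:
  assumes "h \<in> lower_central G n" "k \<in> carrier G"
  shows "cm G h k \<in> lower_central G (Suc n)"
  using assms by (auto simp: comm_subgroup_def cm_def intro!: generate.incl)

lemma (in group) H3_from_nil:
  assumes "nilpotent_class_le G 3" "a \<in> carrier G" "b \<in> carrier G" "d \<in> carrier G"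
  shows "cen (cm G (cm G a b) d)"
proof -
  have l3: "lower_central G (Suc (Suc (Suc 0))) = {\<one>}"
    using assms(1) by (simp add: nilpotent_class_le_def numeral_3_eq_3)
  define u where "u = cm G (cm G a b) d"
  have u: "u \<in> carrier G" using assms u_def by simp
  have u2: "u \<in> lower_central G 2"
    unfolding u_def numeral_2_eq_2 using assms by (intro lc_cm) auto
  have "\<forall>e\<in>carrier G. u \<otimes> e = e \<otimes> u"
  proof
    fix e assume e: "e \<in> carrier G"
    have "cm G u e \<in> lower_central G (Suc (Suc (Suc 0)))"
      using lc_cm[OF u2 e] by (simp add: numeral_2_eq_2)
    hence "cm G u e = \<one>" using l3 by simp
    thus "u \<otimes> e = e \<otimes> u" using cm_eq[OF u e] u e by simp
  qed
  thus ?thesis using u cen_def u_def by simp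
qed

lemma (in group) P_from_powerful:
  assumes pw: "powerful3 (G Mod (center G))" and a: "a \<in> carrier G" and b: "b \<in> carrier G"
  shows "\<exists>w z. w \<in> generate G {g [^] (3::nat) | g. g \<in> carrier G} \<and> cen z \<and> cm G a b = z \<otimes> w"
proof -
  define Z where "Z = center G"
  define Q where "Q = G Mod Z"
  define h where "h = (\<lambda>x. Z #> x)"
  define Cu where "Cu = {g [^] (3::nat) | g. g \<in> carrier G}"
  interpret N: normal Z G using center_normal Z_def by simp
  have gh: "group_hom G Q h"
    unfolding group_hom_def group_hom_axioms_def Q_def h_def
    using N.factorgroup_is_group N.r_coset_hom_Mod is_group by simp
  interpret gh: group_hom G Q h by (rule gh)
  have cQ: "carrier Q = h ` carrier G" unfolding Q_def h_def carrier_FactGroup by simp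
  have cubes: "{q [^]\<^bsub>Q\<^esub> (3::nat) | q. q \<in> carrier Q} = h ` Cu"
    unfolding Cu_def cQ using gh.hom_nat_pow by auto
  have "h (cm G a b) = h a \<otimes>\<^bsub>Q\<^esub> h b \<otimes>\<^bsub>Q\<^esub> inv\<^bsub>Q\<^esub> h a \<otimes>\<^bsub>Q\<^esub> inv\<^bsub>Q\<^esub> h b"
    using a b by (simp add: cm_def)
  moreover have "h a \<in> carrier Q" "h b \<in> carrier Q" using a b by auto
  ultimately have "h (cm G a b) \<in> comm_subgroup Q (carrier Q) (carrier Q)"
    unfolding comm_subgroup_def by (intro generate.incl) blast
  hence "h (cm G a b) \<in> generate Q (h ` Cu)"
    using pw cubes unfolding powerful3_def Q_def Z_def by auto
  also have "\<dots> = h ` generate G Cu" by (rule gh.generate_img) (auto simp: Cu_def)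
  finally obtain w where w: "w \<in> generate G Cu" "h (cm G a b) = h w" by auto
  have wc: "w \<in> carrier G" using w(1) generate_incl[of Cu] by (auto simp: Cu_def)
  have "cm G a b \<in> Z #> w" using w(2) rcos_self[of "cm G a b" Z] a b N.subgroup_axioms h_def by simp
  then obtain z where "z \<in> Z" "cm G a b = z \<otimes> w" unfolding r_coset_def by auto
  thus ?thesis using w(1) Cu_def Z_def cen_center by blast
qed

theorem lemma4p4:
  fixes G (structure)
  assumes "group G"
    and "finite (carrier G)"
    and "\<exists>n::nat. order G = 3 ^ n"
    and "nilpotent_class_le G 3"
    and "powerful3 (G Mod (center G))"
  shows "\<forall>x \<in> Omega1_3 G. x [^] (3::nat) = \<one>"
proof -
  interpret group G by (rule assms(1))
  show ?thesis
    using core[OF H3_from_nil[OF assms(4)] P_from_powerful[OF assms(5)]] by blast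
qed

end
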